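(* Let $n\geq2$ and let $\mathcal R(P_n)=u_1,\ldots,u_r$. Let $k$ be the smallest index such that $x_{n-1}\nmid u_k$. Then $(u_1,\ldots,u_{k-1}):(u_k)=(x_{n-1})$. Moreover, if $i>k$, then $$(u_1,\ldots,u_{i-1}):(u_i)=(x_{n-1})+(u_k,\ldots,u_{i-1}):(u_i).$$
   Context: Let $K$ be a field. For $m\geq 1$, $P_m$ is the path graph on vertices $x_1,\ldots,x_m$ with edges $\{x_i,x_{i+1}\}$. The cover ideal $J(P_m)$ is generated by the monomials $\prod_{x\in C}x$ with $C$ a minimal vertex cover of $P_m$. The rooted list $\mathcal R(P_m)$ is defined recursively: $\mathcal R(P_1)$ empty; $\mathcal R(P_2)=x_1,x_2$; $\mathcal R(P_3)=x_2,x_1x_3$; $\mathcal R(P_4)=x_1x_3,x_2x_3,x_2x_4$; for $m\geq5$, if $\mathcal R(P_{m-2})=u_1,\ldots,u_r$ and $\mathcal R(P_{m-3})=v_1,\ldots,v_s$, then $\mathcal R(P_m)=x_{m-1}u_1,\ldots,x_{m-1}u_r,x_mx_{m-2}v_1,\ldots,x_mx_{m-2}v_s$; it lists each minimal monomial generator of $J(P_m)$ once. *)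

theory Defs
  imports Main "HOL-Library.Poly_Mapping"
begin

type_synonym 'a mpoly = "(nat \<Rightarrow>\<^sub>0 nat) \<Rightarrow>\<^sub>0 'a"

definition xvar :: "nat \<Rightarrow> 'a::field mpoly" where
  "xvar i = Poly_Mapping.single (Poly_Mapping.single i 1) 1"

definition sqmono :: "nat set \<Rightarrow> 'a::field mpoly" where
  "sqmono S = (\<Prod>i\<in>S. xvar i)"

definition ideal_gen :: "'a::field mpoly set \<Rightarrow> 'a mpoly set" where
  "ideal_gen G = {p. \<exists>F c. finite F \<and> F \<subseteq> G \<and> p = (\<Sum>g\<in>F. c g * g)}"

definition ideal_sum :: "'a::field mpoly set \<Rightarrow> 'a mpoly set \<Rightarrow> 'a mpoly set" where
  "ideal_sum I J = {a + b | a b. a \<in> I \<and> b \<in> J}"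

definition ideal_colon :: "'a::field mpoly set \<Rightarrow> 'a mpoly set \<Rightarrow> 'a mpoly set" where
  "ideal_colon I J = {f. \<forall>g\<in>J. f * g \<in> I}"

text \<open>Rooted list of P_m, each monomial given by its support set.\<close>
fun rooted_sets :: "nat \<Rightarrow> nat set list" where
  "rooted_sets 0 = []"
| "rooted_sets (Suc 0) = []"
| "rooted_sets (Suc (Suc 0)) = [{1}, {2}]"
| "rooted_sets (Suc (Suc (Suc 0))) = [{2}, {1, 3}]"
| "rooted_sets (Suc (Suc (Suc (Suc 0)))) = [{1, 3}, {2, 3}, {2, 4}]"
| "rooted_sets (Suc (Suc (Suc (Suc (Suc k))))) =
     map (insert (k + 4)) (rooted_sets (k + 3))
     @ map (\<lambda>S. insert (k + 5) (insert (k + 3) S)) (rooted_sets (k + 2))"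

definition rooted_list :: "nat \<Rightarrow> 'a::field mpoly list" where
  "rooted_list m = map sqmono (rooted_sets m)"

end

theory Submission
  imports Defs
begin

lemma pm_induct[case_names zero single add]:
  fixes P :: "('a \<Rightarrow>\<^sub>0 'b::comm_monoid_add) \<Rightarrow> bool"
  assumes "P 0" "\<And>k a. P (Poly_Mapping.single k a)" "\<And>f g. P f \<Longrightarrow> P g \<Longrightarrow> P (f + g)"
  shows "P f"
proof (induction f rule: Poly_Mapping.update_induct)
  case const then show ?case using assms(1) .
next
  case (update f a b)
  have "Poly_Mapping.update a b f = f + Poly_Mapping.single a b"
    using update(1) by (intro Poly_Mapping.poly_mapping_eqI) (auto simp: Poly_Mapping.lookup_update Poly_Mapping.lookup_add Poly_Mapping.lookup_single in_keys_iff when_def)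
  then show ?case using update assms by simp
qed

definition kill :: "nat \<Rightarrow> 'a::field mpoly \<Rightarrow> 'a mpoly" where
  "kill v p = Abs_poly_mapping (\<lambda>m::nat \<Rightarrow>\<^sub>0 nat. if Poly_Mapping.lookup m v = 0 then Poly_Mapping.lookup p m else 0)"

lemma lookup_kill: "Poly_Mapping.lookup (kill v p) m = (if Poly_Mapping.lookup m v = 0 then Poly_Mapping.lookup p m else 0)"
proof -
  have "finite {m. (if Poly_Mapping.lookup m v = 0 then Poly_Mapping.lookup p m else 0) \<noteq> 0}"
    by (rule finite_subset[OF _ finite_lookup[of p]]) auto
  then show ?thesis unfolding kill_def by simp
qed

lemma kill_add: "kill v (p + q) = kill v p + kill v q"
  by (intro Poly_Mapping.poly_mapping_eqI) (simp add: lookup_kill Poly_Mapping.lookup_add)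

lemma kill_zero[simp]: "kill v 0 = 0"
  by (intro Poly_Mapping.poly_mapping_eqI) (simp add: lookup_kill)

lemma kill_single: "kill v (Poly_Mapping.single m c) = (if Poly_Mapping.lookup m v = 0 then Poly_Mapping.single m c else 0)"
  by (intro Poly_Mapping.poly_mapping_eqI) (auto simp add: lookup_kill Poly_Mapping.lookup_single when_def)

lemma kill_mult: "kill v (p * q) = kill v p * kill v q"
proof (induction p rule: pm_induct)
  case zero then show ?case by simp
next
  case (add f g) then show ?case by (simp add: distrib_right kill_add)
next
  case (single k a)
  show ?case
  proof (induction q rule: pm_induct)
    case zero then show ?case by simp
  next
    case (add f g) then show ?case by (simp add: distrib_left kill_add)
  next
    case (single k' b)
    show ?case by (simp add: mult_single kill_single Poly_Mapping.lookup_add)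
  qed
qed

lemma kill_minus: "kill v (p - q) = kill v p - kill v q"
  by (intro Poly_Mapping.poly_mapping_eqI) (simp add: lookup_kill Poly_Mapping.lookup_minus)

lemma kill_sum: "kill v (\<Sum>g\<in>F. f g) = (\<Sum>g\<in>F. kill v (f g))"
  by (induction F rule: infinite_finite_induct) (auto simp: kill_add)

lemma kill_xvar: "kill v (xvar v) = 0"
  by (simp add: xvar_def kill_single)

lemma kill_decomp: "\<exists>q. p - kill v p = xvar v * q"
proof (induction p rule: pm_induct)
  case zero then show ?case by simp
next
  case (add f g)
  then obtain a b where "f - kill v f = xvar v * a" "g - kill v g = xvar v * b" by blast
  moreover have "f + g - kill v (f + g) = (f - kill v f) + (g - kill v g)"
    by (simp add: kill_add)
  ultimately have "f + g - kill v (f + g) = xvar v * (a + b)"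
    by (simp add: distrib_left)
  then show ?case by blast
next
  case (single m c)
  show ?case
  proof (cases "Poly_Mapping.lookup m v = 0")
    case True then show ?thesis by (simp add: kill_single)
  next
    case False
    have "Poly_Mapping.single v 1 + (m - Poly_Mapping.single v 1) = m"
      using False by (intro Poly_Mapping.poly_mapping_eqI) (auto simp: Poly_Mapping.lookup_add Poly_Mapping.lookup_minus Poly_Mapping.lookup_single when_def)
    then have "xvar v * Poly_Mapping.single (m - Poly_Mapping.single v 1) c = Poly_Mapping.single m c"
      by (simp add: xvar_def mult_single)
    then show ?thesis using False by (metis kill_single diff_zero)
  qed
qed

lemma idom_test: "(a::'a::field mpoly) * b = 0 \<Longrightarrow> a = 0 \<or> b = 0" by simp


lemma kill_one[simp]: "kill v 1 = 1"
  by (metis Poly_Mapping.single_one kill_single Poly_Mapping.lookup_zero)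

lemma kill_xvar_gen: "kill v (xvar i) = (if i = v then 0 else xvar i)"
  by (simp add: xvar_def kill_single Poly_Mapping.lookup_single when_def)

lemma kill_prod: "kill v (\<Prod>i\<in>S. f i) = (\<Prod>i\<in>S. kill v (f i))"
  by (induction S rule: infinite_finite_induct) (auto simp: kill_mult)

lemma xvar_nz: "(xvar i :: 'a::field mpoly) \<noteq> 0"
proof
  assume "(xvar i :: 'a::field mpoly) = 0"
  then have "Poly_Mapping.lookup (xvar i :: 'a mpoly) (Poly_Mapping.single i 1) = 0" by simp
  then show False by (simp add: xvar_def)
qed

lemma sqmono_nz: "finite S \<Longrightarrow> (sqmono S :: 'a::field mpoly) \<noteq> 0"
  by (simp add: sqmono_def xvar_nz)

lemma kill_sqmono: "finite S \<Longrightarrow> kill v (sqmono S) = (if v \<in> S then 0 else sqmono S)"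
  unfolding sqmono_def kill_prod
  by (auto simp: kill_xvar_gen intro: prod.cong)

lemma sqmono_insert: "finite S \<Longrightarrow> v \<notin> S \<Longrightarrow> sqmono (insert v S) = xvar v * sqmono S"
  by (simp add: sqmono_def)

lemma sqmono_dvd: "finite S \<Longrightarrow> T \<subseteq> S \<Longrightarrow> sqmono T dvd sqmono S"
  unfolding sqmono_def by (rule prod_dvd_prod_subset)

lemma xvar_dvd_sqmono: "finite S \<Longrightarrow> v \<in> S \<Longrightarrow> xvar v dvd sqmono S"
  unfolding sqmono_def by (rule dvd_prodI)

lemma not_xvar_dvd_sqmono: "finite S \<Longrightarrow> v \<notin> S \<Longrightarrow> \<not> xvar v dvd (sqmono S :: 'a::field mpoly)"
proof
  assume "finite S" "v \<notin> S" "xvar v dvd (sqmono S :: 'a mpoly)"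
  then obtain q where "sqmono S = xvar v * (q :: 'a mpoly)" by (auto elim: dvdE)
  then have "kill v (sqmono S :: 'a mpoly) = 0" by (simp add: kill_mult kill_xvar)
  with \<open>finite S\<close> \<open>v \<notin> S\<close> show False by (simp add: kill_sqmono sqmono_nz)
qed

lemma igI: "finite F \<Longrightarrow> F \<subseteq> G \<Longrightarrow> p = (\<Sum>g\<in>F. c g * g) \<Longrightarrow> p \<in> ideal_gen G"
  unfolding ideal_gen_def by blast

lemma ig_zero: "0 \<in> ideal_gen G"
  by (rule igI[of "{}"]) auto

lemma ig_base: "g \<in> G \<Longrightarrow> g \<in> ideal_gen G"
  by (rule igI[of "{g}" _ _ "\<lambda>_. 1"]) auto

lemma ig_add:
  assumes "a \<in> ideal_gen G" "b \<in> ideal_gen G" shows "a + b \<in> ideal_gen G"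
proof -
  obtain F1 c1 where 1: "finite F1" "F1 \<subseteq> G" "a = (\<Sum>g\<in>F1. c1 g * g)"
    using assms(1) unfolding ideal_gen_def by blast
  obtain F2 c2 where 2: "finite F2" "F2 \<subseteq> G" "b = (\<Sum>g\<in>F2. c2 g * g)"
    using assms(2) unfolding ideal_gen_def by blast
  define c where "c g = (if g \<in> F1 then c1 g else 0) + (if g \<in> F2 then c2 g else 0)" for g
  have "(\<Sum>g\<in>F1 \<union> F2. c g * g) = (\<Sum>g\<in>F1 \<union> F2. (if g \<in> F1 then c1 g * g else 0))
      + (\<Sum>g\<in>F1 \<union> F2. (if g \<in> F2 then c2 g * g else 0))"
  proof -
    have "\<And>g. c g * g = (if g \<in> F1 then c1 g * g else 0) + (if g \<in> F2 then c2 g * g else 0)"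
      unfolding c_def by (simp add: distrib_right)
    then show ?thesis by (simp add: sum.distrib)
  qed
  also have "\<dots> = a + b"
  proof -
    have "(\<Sum>g\<in>F1 \<union> F2. if g \<in> F1 then c1 g * g else 0) = (\<Sum>g\<in>(F1 \<union> F2) \<inter> F1. c1 g * g)"
      using 1 2 by (intro sum.inter_restrict[symmetric]) auto
    moreover have "(\<Sum>g\<in>F1 \<union> F2. if g \<in> F2 then c2 g * g else 0) = (\<Sum>g\<in>(F1 \<union> F2) \<inter> F2. c2 g * g)"
      using 1 2 by (intro sum.inter_restrict[symmetric]) auto
    moreover have "(F1 \<union> F2) \<inter> F1 = F1" "(F1 \<union> F2) \<inter> F2 = F2" by auto
    ultimately show ?thesis using 1 2 by simp
  qed
  finally show ?thesis using 1 2 by (intro igI[of "F1 \<union> F2" _ _ c]) auto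
qed

lemma ig_mult: "p \<in> ideal_gen G \<Longrightarrow> q * p \<in> ideal_gen G"
proof -
  assume "p \<in> ideal_gen G"
  then obtain F c where 1: "finite F" "F \<subseteq> G" "p = (\<Sum>g\<in>F. c g * g)"
    unfolding ideal_gen_def by blast
  then have "q * p = (\<Sum>g\<in>F. (q * c g) * g)" by (simp add: sum_distrib_left mult.assoc)
  then show ?thesis using 1 by (intro igI[of F _ _ "\<lambda>g. q * c g"]) auto
qed

lemma ig_sum: "(\<And>x. x \<in> F \<Longrightarrow> f x \<in> ideal_gen G) \<Longrightarrow> (\<Sum>x\<in>F. f x) \<in> ideal_gen G"
  by (induction F rule: infinite_finite_induct) (auto simp: ig_zero ig_add)

lemma ig_sub: assumes "G \<subseteq> ideal_gen H" shows "ideal_gen G \<subseteq> ideal_gen H"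
proof
  fix p assume "p \<in> ideal_gen G"
  then obtain F c where 1: "finite F" "F \<subseteq> G" "p = (\<Sum>g\<in>F. c g * g)"
    unfolding ideal_gen_def by blast
  show "p \<in> ideal_gen H" unfolding 1(3) using 1 assms by (intro ig_sum ig_mult) auto
qed

lemma ig_mono: "G \<subseteq> H \<Longrightarrow> ideal_gen G \<subseteq> ideal_gen H"
  using ig_sub ig_base by (metis subset_iff)

lemma ig_single: "p \<in> ideal_gen {u} \<longleftrightarrow> (\<exists>c. p = c * u)"
proof
  assume "p \<in> ideal_gen {u}"
  then obtain F c where 1: "finite F" "F \<subseteq> {u}" "p = (\<Sum>g\<in>F. c g * g)"
    unfolding ideal_gen_def by blast
  then have "F = {} \<or> F = {u}" by blast
  then show "\<exists>c. p = c * u"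
  proof
    assume "F = {}" then show ?thesis using 1 by (intro exI[of _ 0]) simp
  next
    assume "F = {u}" then show ?thesis using 1 by (intro exI[of _ "c u"]) simp
  qed
next
  assume "\<exists>c. p = c * u"
  then obtain c where "p = c * u" by blast
  then show "p \<in> ideal_gen {u}" using ig_mult[OF ig_base[of u "{u}"]] by simp
qed

lemma ig_kill:
  assumes "p \<in> ideal_gen G" "\<And>g. g \<in> G \<Longrightarrow> kill v g \<in> ideal_gen H"
  shows "kill v p \<in> ideal_gen H"
proof -
  obtain F c where 1: "finite F" "F \<subseteq> G" "p = (\<Sum>g\<in>F. c g * g)"
    using assms(1) unfolding ideal_gen_def by blast
  show ?thesis unfolding 1(3) kill_sum kill_mult using 1 assms(2) by (intro ig_sum ig_mult) auto
qed

lemma colon_single: "f \<in> ideal_colon (ideal_gen G) (ideal_gen {u}) \<longleftrightarrow> f * u \<in> ideal_gen G"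
proof
  assume "f \<in> ideal_colon (ideal_gen G) (ideal_gen {u})"
  then show "f * u \<in> ideal_gen G" unfolding ideal_colon_def using ig_base[of u "{u}"] by blast
next
  assume a: "f * u \<in> ideal_gen G"
  show "f \<in> ideal_colon (ideal_gen G) (ideal_gen {u})"
    unfolding ideal_colon_def
  proof
    show "\<forall>g\<in>ideal_gen {u}. f * g \<in> ideal_gen G"
    proof
      fix g assume "g \<in> ideal_gen {u}"
      then obtain c where "g = c * u" using ig_single by blast
      then have eq: "f * g = c * (f * u)" by (simp add: algebra_simps)
      show "f * g \<in> ideal_gen G" unfolding eq by (rule ig_mult[OF a])
    qed
  qed
qed


lemma ig_empty: "p \<in> ideal_gen {} \<Longrightarrow> p = 0"
  unfolding ideal_gen_def by auto

lemma in_take_nth: "l < k \<Longrightarrow> l < length xs \<Longrightarrow> xs ! l \<in> set (take k xs)"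
  by (metis nth_take length_take min_less_iff_conj nth_mem)

lemma take_elem: "g \<in> set (take k xs) \<Longrightarrow> \<exists>j<k. j < length xs \<and> g = xs ! j"
  by (auto simp: in_set_conv_nth)

lemma drop_elem: "g \<in> set (drop k xs) \<Longrightarrow> \<exists>j. k \<le> j \<and> j < length xs \<and> g = xs ! j"
  by (auto simp: in_set_conv_nth) (metis add.commute le_add2 less_diff_conv)

lemma drop_take_sub: "set (drop k (take i xs)) \<subseteq> set (drop k xs)"
  unfolding drop_take by (rule set_take_subset)

lemma take_split: "k \<le> i \<Longrightarrow> set (take i xs) \<subseteq> set (take k xs) \<union> set (drop k (take i xs))"
proof -
  assume "k \<le> i"
  have "take i xs = take k (take i xs) @ drop k (take i xs)" by (rule append_take_drop_id[symmetric])
  moreover have "take k (take i xs) = take k xs" using \<open>k \<le> i\<close> by (simp add: min_absorb1)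
  ultimately show ?thesis by (metis set_append order_refl)
qed

lemma abstract_main:
  fixes Ls :: "nat set list" and v k :: nat and us :: "'a::field mpoly list"
  assumes us_def: "us = map sqmono Ls"
    and kl: "k < length Ls"
    and fin: "\<forall>S\<in>set Ls. finite S"
    and pre: "\<forall>j<k. v \<in> Ls!j"
    and post: "\<forall>j. k \<le> j \<and> j < length Ls \<longrightarrow> v \<notin> Ls!j"
    and cov: "\<forall>j. k \<le> j \<and> j < length Ls \<longrightarrow> (\<exists>l<k. Ls!l \<subseteq> insert v (Ls!j))"
  shows "k = (LEAST j. j < length us \<and> \<not> xvar v dvd us ! j)"
    and "ideal_colon (ideal_gen (set (take k us))) (ideal_gen {us ! k}) = ideal_gen {xvar v}"
    and "\<forall>i. k < i \<and> i < length us \<longrightarrow>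
           ideal_colon (ideal_gen (set (take i us))) (ideal_gen {us ! i})
           = ideal_sum (ideal_gen {xvar v})
               (ideal_colon (ideal_gen (set (drop k (take i us)))) (ideal_gen {us ! i}))"
proof -
  have len: "length us = length Ls" using us_def by simp
  have usj: "j < length Ls \<Longrightarrow> us ! j = sqmono (Ls ! j)" for j using us_def by simp
  have finj: "j < length Ls \<Longrightarrow> finite (Ls ! j)" for j using fin nth_mem by blast
  show "k = (LEAST j. j < length us \<and> \<not> xvar v dvd us ! j)"
  proof (rule Least_equality[symmetric])
    have "\<not> xvar v dvd (sqmono (Ls ! k) :: 'a mpoly)"
      using kl post finj by (intro not_xvar_dvd_sqmono) auto
    then show "k < length us \<and> \<not> xvar v dvd us ! k"
      using kl usj len by simp
  next
    fix y assume "y < length us \<and> \<not> xvar v dvd us ! y"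
    show "k \<le> y"
    proof (rule ccontr)
      assume "\<not> k \<le> y"
      then have "y < k" by simp
      then have "v \<in> Ls ! y" "y < length Ls" "finite (Ls ! y)" using pre kl finj by auto
      then have "xvar v dvd us ! y" using usj xvar_dvd_sqmono by simp
      then show False using \<open>y < length us \<and> \<not> xvar v dvd us ! y\<close> by simp
    qed
  qed
  have X: "xvar v * us ! j \<in> ideal_gen (set (take k us))" if jj: "k \<le> j" "j < length Ls" for j
  proof -
    obtain l where l: "l < k" "Ls ! l \<subseteq> insert v (Ls ! j)" using cov jj by blast
    have "xvar v * us ! j = sqmono (insert v (Ls ! j))"
      using jj post finj usj by (simp add: sqmono_insert)
    moreover have "sqmono (Ls ! l) dvd (sqmono (insert v (Ls ! j)) :: 'a mpoly)"
      using l finj jj by (intro sqmono_dvd) auto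
    moreover have "us ! l = sqmono (Ls ! l)" using usj l kl by simp
    ultimately have "us ! l dvd xvar v * us ! j" by simp
    then obtain q where q0: "xvar v * us ! j = us ! l * q" by (rule dvdE)
    have q: "xvar v * us ! j = q * us ! l" using q0 by (simp only: mult.commute[of q])
    have "us ! l \<in> set (take k us)" using l kl len by (intro in_take_nth) auto
    then show ?thesis unfolding q by (intro ig_mult ig_base)
  qed
  have K0: "kill v g = 0" if gin: "g \<in> set (take k us)" for g
  proof -
    obtain j where "j < k" "j < length us" "g = us ! j" using take_elem[OF gin] by blast
    moreover have "v \<in> Ls ! j" "finite (Ls ! j)" using pre finj \<open>j < k\<close> \<open>j < length us\<close> len by auto
    ultimately show ?thesis using usj len by (simp add: kill_sqmono)
  qed
  have K1: "kill v g = g" if gin: "g \<in> set (drop k us)" for g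
  proof -
    obtain j where "k \<le> j" "j < length us" "g = us ! j" using drop_elem[OF gin] by blast
    moreover have "v \<notin> Ls ! j" "finite (Ls ! j)" using post finj \<open>k \<le> j\<close> \<open>j < length us\<close> len by auto
    ultimately show ?thesis using usj len by (simp add: kill_sqmono)
  qed
  have uk_nz: "us ! k \<noteq> 0" and kill_uk: "kill v (us ! k) = us ! k"
  proof -
    have "v \<notin> Ls ! k" "finite (Ls ! k)" using post finj kl by auto
    then show "us ! k \<noteq> 0" "kill v (us ! k) = us ! k" using usj kl by (simp_all add: kill_sqmono sqmono_nz)
  qed
  show "ideal_colon (ideal_gen (set (take k us))) (ideal_gen {us ! k}) = ideal_gen {xvar v}"
  proof
    show "ideal_colon (ideal_gen (set (take k us))) (ideal_gen {us ! k}) \<subseteq> ideal_gen {xvar v}"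
    proof
      fix f :: "'a mpoly" assume "f \<in> ideal_colon (ideal_gen (set (take k us))) (ideal_gen {us ! k})"
      then have fu: "f * us ! k \<in> ideal_gen (set (take k us))" by (simp add: colon_single)
      have "kill v (f * us ! k) \<in> ideal_gen {}"
        using fu by (rule ig_kill) (simp add: K0 ig_zero)
      then have "kill v (f * us ! k) = 0" by (rule ig_empty)
      then have "kill v f * us ! k = 0" by (simp add: kill_mult kill_uk)
      then have "kill v f = 0" using uk_nz by simp
      then obtain q where "f = xvar v * q" using kill_decomp[of f v] by auto
      then show "f \<in> ideal_gen {xvar v}" by (simp add: ig_single mult.commute)
    qed
  next
    show "ideal_gen {xvar v} \<subseteq> ideal_colon (ideal_gen (set (take k us))) (ideal_gen {us ! k})"
    proof
      fix f :: "'a mpoly" assume "f \<in> ideal_gen {xvar v}"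
      then obtain c where c: "f = c * xvar v" by (auto simp: ig_single)
      have eq: "f * us ! k = c * (xvar v * us ! k)" unfolding c by (simp add: mult.assoc)
      have "f * us ! k \<in> ideal_gen (set (take k us))" unfolding eq by (rule ig_mult[OF X[OF order_refl kl]])
      then show "f \<in> ideal_colon (ideal_gen (set (take k us))) (ideal_gen {us ! k})"
        by (simp add: colon_single)
    qed
  qed
  show "\<forall>i. k < i \<and> i < length us \<longrightarrow>
           ideal_colon (ideal_gen (set (take i us))) (ideal_gen {us ! i})
           = ideal_sum (ideal_gen {xvar v})
               (ideal_colon (ideal_gen (set (drop k (take i us)))) (ideal_gen {us ! i}))"
  proof (intro allI impI)
    fix i assume i: "k < i \<and> i < length us"
    have ki: "k \<le> i" and il: "i < length Ls" using i len by auto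
    let ?I = "ideal_gen (set (take i us))"
    let ?B = "ideal_gen (set (drop k (take i us)))"
    let ?u = "us ! i"
    have "v \<notin> Ls ! i" "finite (Ls ! i)" using post finj i len by auto
    then have kill_u: "kill v ?u = ?u" using i len usj by (simp add: kill_sqmono)
    show "ideal_colon ?I (ideal_gen {?u}) = ideal_sum (ideal_gen {xvar v}) (ideal_colon ?B (ideal_gen {?u}))"
    proof
      show "ideal_colon ?I (ideal_gen {?u}) \<subseteq> ideal_sum (ideal_gen {xvar v}) (ideal_colon ?B (ideal_gen {?u}))"
      proof
        fix f :: "'a mpoly" assume "f \<in> ideal_colon ?I (ideal_gen {?u})"
        then have fu: "f * ?u \<in> ?I" by (simp add: colon_single)
        have "kill v (f * ?u) \<in> ?B"
        proof (rule ig_kill[OF fu])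
          fix g assume g: "g \<in> set (take i us)"
          show "kill v g \<in> ?B"
          proof (cases "g \<in> set (take k us)")
            case True show ?thesis unfolding K0[OF True] by (rule ig_zero)
          next
            case False
            have gd: "g \<in> set (drop k (take i us))" using g False take_split[OF ki, of us] by blast
            have kg: "kill v g = g" by (rule K1[OF subsetD[OF drop_take_sub gd]])
            show ?thesis unfolding kg by (rule ig_base[OF gd])
          qed
        qed
        then have "kill v f \<in> ideal_colon ?B (ideal_gen {?u})"
          by (simp add: colon_single kill_mult kill_u)
        moreover obtain q where q: "f - kill v f = xvar v * q" using kill_decomp by blast
        have "f - kill v f = q * xvar v" using q by (simp only: mult.commute[of q])
        then have "f - kill v f \<in> ideal_gen {xvar v}" unfolding ig_single by (rule exI)
        moreover have "f = (f - kill v f) + kill v f" by simp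
        ultimately show "f \<in> ideal_sum (ideal_gen {xvar v}) (ideal_colon ?B (ideal_gen {?u}))"
          unfolding ideal_sum_def by blast
      qed
    next
      show "ideal_sum (ideal_gen {xvar v}) (ideal_colon ?B (ideal_gen {?u})) \<subseteq> ideal_colon ?I (ideal_gen {?u})"
      proof
        fix f :: "'a mpoly" assume "f \<in> ideal_sum (ideal_gen {xvar v}) (ideal_colon ?B (ideal_gen {?u}))"
        then obtain a b where f: "f = a + b" and a: "a \<in> ideal_gen {xvar v}"
          and b: "b \<in> ideal_colon ?B (ideal_gen {?u})" unfolding ideal_sum_def by blast
        obtain c where c: "a = c * xvar v" using a by (auto simp: ig_single)
        have eq: "a * ?u = c * (xvar v * ?u)" unfolding c by (simp add: mult.assoc)
        have "a * ?u \<in> ideal_gen (set (take k us))" unfolding eq by (rule ig_mult[OF X[OF ki il]])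
        moreover have "ideal_gen (set (take k us)) \<subseteq> ?I"
          by (rule ig_mono[OF set_take_subset_set_take[OF ki]])
        ultimately have 1: "a * ?u \<in> ?I" by blast
        have "b * ?u \<in> ?B" using b by (simp add: colon_single)
        moreover have "?B \<subseteq> ?I" by (rule ig_mono[OF set_drop_subset])
        ultimately have 2: "b * ?u \<in> ?I" by blast
        have "f * ?u \<in> ?I" unfolding f distrib_right using 1 2 by (rule ig_add)
        then show "f \<in> ideal_colon ?I (ideal_gen {?u})" by (simp add: colon_single)
      qed
    qed
  qed
qed


lemma abstract_main2:
  fixes Ls :: "nat set list" and v k :: nat and us :: "'a::field mpoly list"
  assumes us_def: "us = map sqmono Ls"
    and kl: "k < length Ls"
    and fin: "\<forall>S\<in>set Ls. finite S"
    and pre: "\<forall>S\<in>set (take k Ls). v \<in> S"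
    and post: "\<forall>S\<in>set (drop k Ls). v \<notin> S \<and> (\<exists>T\<in>set (take k Ls). T \<subseteq> insert v S)"
  shows "k = (LEAST j. j < length us \<and> \<not> xvar v dvd us ! j)"
    and "ideal_colon (ideal_gen (set (take k us))) (ideal_gen {us ! k}) = ideal_gen {xvar v}"
    and "\<forall>i. k < i \<and> i < length us \<longrightarrow>
           ideal_colon (ideal_gen (set (take i us))) (ideal_gen {us ! i})
           = ideal_sum (ideal_gen {xvar v})
               (ideal_colon (ideal_gen (set (drop k (take i us)))) (ideal_gen {us ! i}))"
proof -
  have pre': "\<forall>j<k. v \<in> Ls!j"
  proof (intro allI impI)
    fix j assume "j < k"
    then have "Ls ! j \<in> set (take k Ls)" using kl by (intro in_take_nth) auto
    then show "v \<in> Ls ! j" using pre by blast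
  qed
  have indrop: "Ls ! j \<in> set (drop k Ls)" if "k \<le> j" "j < length Ls" for j
  proof -
    have "drop k Ls ! (j - k) = Ls ! j" using that by simp
    moreover have "j - k < length (drop k Ls)" using that by simp
    ultimately show ?thesis by (metis nth_mem)
  qed
  have post': "\<forall>j. k \<le> j \<and> j < length Ls \<longrightarrow> v \<notin> Ls!j"
    using indrop post by blast
  have cov': "\<forall>j. k \<le> j \<and> j < length Ls \<longrightarrow> (\<exists>l<k. Ls!l \<subseteq> insert v (Ls!j))"
  proof (intro allI impI)
    fix j assume j: "k \<le> j \<and> j < length Ls"
    then obtain T where T: "T \<in> set (take k Ls)" "T \<subseteq> insert v (Ls ! j)"
      using indrop post by blast
    obtain l where "l < k" "l < length Ls" "T = Ls ! l" using take_elem[OF T(1)] by blast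
    then show "\<exists>l<k. Ls!l \<subseteq> insert v (Ls!j)" using T(2) by blast
  qed
  show "k = (LEAST j. j < length us \<and> \<not> xvar v dvd us ! j)"
    and "ideal_colon (ideal_gen (set (take k us))) (ideal_gen {us ! k}) = ideal_gen {xvar v}"
    and "\<forall>i. k < i \<and> i < length us \<longrightarrow>
           ideal_colon (ideal_gen (set (take i us))) (ideal_gen {us ! i})
           = ideal_sum (ideal_gen {xvar v})
               (ideal_colon (ideal_gen (set (drop k (take i us)))) (ideal_gen {us ! i}))"
    using abstract_main[OF us_def kl fin pre' post' cov'] by blast+
qed

definition cov :: "nat \<Rightarrow> nat set \<Rightarrow> bool" where
  "cov m C \<longleftrightarrow> (\<forall>i. 1 \<le> i \<and> i < m \<longrightarrow> i \<in> C \<or> Suc i \<in> C)"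

lemma cov_0[simp]: "cov 0 C"
  by (simp add: cov_def)

lemma cov_Suc: "cov (Suc m) C \<longleftrightarrow> cov m C \<and> (1 \<le> m \<longrightarrow> m \<in> C \<or> Suc m \<in> C)"
  unfolding cov_def by (auto simp: less_Suc_eq)

lemma cov_mono: "cov m C \<Longrightarrow> C \<subseteq> D \<Longrightarrow> cov m D"
  unfolding cov_def by blast

lemma cov_le: "cov m C \<Longrightarrow> m' \<le> m \<Longrightarrow> cov m' C"
  unfolding cov_def by auto

lemma cov_edge: "cov m C \<Longrightarrow> 1 \<le> i \<Longrightarrow> i < m \<Longrightarrow> i \<in> C \<or> Suc i \<in> C"
  unfolding cov_def by auto

lemma cov_add1: "cov j C \<Longrightarrow> j + 1 \<in> C \<Longrightarrow> cov (j + 1) C"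
  unfolding cov_def by (metis Suc_eq_plus1 less_Suc_eq)

lemma cov_add2: "cov (j + 3) C \<Longrightarrow> j + 4 \<in> C \<Longrightarrow> cov (j + 5) C"
  unfolding cov_def
proof (intro allI impI)
  fix i assume c: "\<forall>i. 1 \<le> i \<and> i < j + 3 \<longrightarrow> i \<in> C \<or> Suc i \<in> C" and "j + 4 \<in> C"
    and i: "1 \<le> i \<and> i < j + 5"
  show "i \<in> C \<or> Suc i \<in> C"
  proof (cases "i < j + 3")
    case True then show ?thesis using c i by blast
  next
    case False
    then have "Suc i = j + 4 \<or> i = j + 4" using i by arith
    then show ?thesis using \<open>j + 4 \<in> C\<close> by metis
  qed
qed

lemma cov_add3: "cov (j + 2) C \<Longrightarrow> j + 3 \<in> C \<Longrightarrow> j + 5 \<in> C \<Longrightarrow> cov (j + 5) C"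
  unfolding cov_def
proof (intro allI impI)
  fix i assume c: "\<forall>i. 1 \<le> i \<and> i < j + 2 \<longrightarrow> i \<in> C \<or> Suc i \<in> C" and "j + 3 \<in> C" "j + 5 \<in> C"
    and i: "1 \<le> i \<and> i < j + 5"
  show "i \<in> C \<or> Suc i \<in> C"
  proof (cases "i < j + 2")
    case True then show ?thesis using c i by blast
  next
    case False
    then have "Suc i = j + 3 \<or> i = j + 3 \<or> Suc i = j + 5" using i by arith
    then show ?thesis using \<open>j + 3 \<in> C\<close> \<open>j + 5 \<in> C\<close> by metis
  qed
qed

lemma cov_UNIV: "cov m UNIV"
  by (simp add: cov_def)

lemma R_step: "rooted_sets (m + 5) = map (insert (m + 4)) (rooted_sets (m + 3))
     @ map (\<lambda>S. insert (m + 5) (insert (m + 3) S)) (rooted_sets (m + 2))"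
proof -
  have e: "m + 5 = Suc (Suc (Suc (Suc (Suc m))))" by simp
  have "rooted_sets (Suc (Suc (Suc (Suc (Suc m))))) = map (insert (m + 4)) (rooted_sets (m + 3))
     @ map (\<lambda>S. insert (m + 5) (insert (m + 3) S)) (rooted_sets (m + 2))"
    by (simp only: rooted_sets.simps)
  then show ?thesis by (simp only: e)
qed

lemma small_cases: "m < 5 \<Longrightarrow> m = 0 \<or> m = Suc 0 \<or> m = Suc (Suc 0) \<or> m = Suc (Suc (Suc 0)) \<or> m = Suc (Suc (Suc (Suc 0)))"
  by arith

lemma R_props: "T \<in> set (rooted_sets m) \<Longrightarrow> finite T \<and> (\<forall>x\<in>T. x \<le> m) \<and> cov m T"
proof (induction m arbitrary: T rule: less_induct)
  case (less m)
  show ?case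
  proof (cases "m < 5")
    case True
    then show ?thesis using less.prems by (elim small_cases[elim_format] disjE) (auto simp: numeral_eq_Suc cov_Suc)
  next
    case False
    then obtain j where m: "m = j + 5" by (metis add.commute le_Suc_ex not_less)
    from less.prems[unfolded m R_step]
    have "T \<in> insert (j + 4) ` set (rooted_sets (j + 3)) \<or>
      T \<in> (\<lambda>S. insert (j + 5) (insert (j + 3) S)) ` set (rooted_sets (j + 2))" by simp
    then show ?thesis
    proof (elim disjE imageE)
      fix S assume T: "T = insert (j + 4) S" and S: "S \<in> set (rooted_sets (j + 3))"
      have "finite S \<and> (\<forall>x\<in>S. x \<le> j + 3) \<and> cov (j + 3) S" using less.IH[OF _ S] m by simp
      moreover have "cov (j + 5) T"
      proof -
        have "cov (j + 3) T" using calculation T cov_mono by blast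
        then show ?thesis using T by (intro cov_add2) auto
      qed
      ultimately show ?thesis using T m by auto
    next
      fix S assume T: "T = insert (j + 5) (insert (j + 3) S)" and S: "S \<in> set (rooted_sets (j + 2))"
      have "finite S \<and> (\<forall>x\<in>S. x \<le> j + 2) \<and> cov (j + 2) S" using less.IH[OF _ S] m by simp
      moreover have "cov (j + 5) T"
      proof -
        have "cov (j + 2) T" using calculation T cov_mono by blast
        then show ?thesis using T by (intro cov_add3) auto
      qed
      ultimately show ?thesis using T m by auto
    qed
  qed
qed

lemma cov_R: "2 \<le> m \<Longrightarrow> cov m C \<Longrightarrow> \<exists>T\<in>set (rooted_sets m). T \<subseteq> C"
proof (induction m arbitrary: C rule: less_induct)
  case (less m)
  show ?case
  proof (cases "m < 5")
    case True
    then show ?thesis using less.prems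
      by (elim small_cases[elim_format] disjE) (auto simp: numeral_eq_Suc cov_Suc)
  next
    case False
    then obtain j where m: "m = j + 5" by (metis add.commute le_Suc_ex not_less)
    have c5: "cov (j + 5) C" using less.prems m by simp
    have c3: "cov (j + 3) C" and c2: "cov (j + 2) C" using cov_le[OF c5] by auto
    have s3: "Suc (j + 3) = j + 4" and s4: "Suc (j + 4) = j + 5" by simp_all
    have e3: "j + 3 \<in> C \<or> j + 4 \<in> C" using cov_edge[OF c5, of "j + 3"] unfolding s3 by simp
    have e4: "j + 4 \<in> C \<or> j + 5 \<in> C" using cov_edge[OF c5, of "j + 4"] unfolding s4 by simp
    show ?thesis
    proof (cases "j + 4 \<in> C")
      case True
      have "cov (j + 3) C" using c3 by simp
      then obtain S where S: "S \<in> set (rooted_sets (j + 3))" "S \<subseteq> C"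
        using less.IH[of "j + 3"] m by auto
      then have "insert (j + 4) S \<in> set (rooted_sets m)" unfolding m R_step by auto
      moreover have "insert (j + 4) S \<subseteq> C" using S True by auto
      ultimately show ?thesis by blast
    next
      case False
      then have a: "j + 3 \<in> C" "j + 5 \<in> C" using e3 e4 by simp_all
      have "cov (j + 2) C" using c2 by simp
      then obtain S where S: "S \<in> set (rooted_sets (j + 2))" "S \<subseteq> C"
        using less.IH[of "j + 2"] m by auto
      then have "insert (j + 5) (insert (j + 3) S) \<in> set (rooted_sets m)" unfolding m R_step by auto
      moreover have "insert (j + 5) (insert (j + 3) S) \<subseteq> C" using S a by auto
      ultimately show ?thesis by blast
    qed
  qed
qed


lemma rooted_conds:
  assumes "2 \<le> n"
  shows "\<exists>k0. k0 < length (rooted_sets n) \<and> (\<forall>S\<in>set (take k0 (rooted_sets n)). n - 1 \<in> S)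
     \<and> (\<forall>S\<in>set (drop k0 (rooted_sets n)). n - 1 \<notin> S \<and> (\<exists>T\<in>set (take k0 (rooted_sets n)). T \<subseteq> insert (n - 1) S))"
proof (cases "n < 5")
  case True
  then have "n = Suc (Suc 0) \<or> n = Suc (Suc (Suc 0)) \<or> n = Suc (Suc (Suc (Suc 0)))"
    using assms by arith
  then show ?thesis
  proof (elim disjE)
    assume n: "n = Suc (Suc 0)"
    show ?thesis unfolding n by (rule exI[of _ 1]) (simp add: numeral_eq_Suc)
  next
    assume n: "n = Suc (Suc (Suc 0))"
    show ?thesis unfolding n by (rule exI[of _ 1]) (simp add: numeral_eq_Suc)
  next
    assume n: "n = Suc (Suc (Suc (Suc 0)))"
    show ?thesis unfolding n by (rule exI[of _ 2]) (simp add: numeral_eq_Suc)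
  qed
next
  case False
  then obtain j where n: "n = j + 5" by (metis add.commute le_Suc_ex not_less)
  define A where "A = map (insert (j + 4)) (rooted_sets (j + 3))"
  define B where "B = map (\<lambda>S. insert (j + 5) (insert (j + 3) S)) (rooted_sets (j + 2))"
  have R: "rooted_sets n = A @ B" unfolding n A_def B_def by (rule R_step)
  have v: "n - 1 = j + 4" using n by simp
  have tk: "take (length A) (rooted_sets n) = A" and dk: "drop (length A) (rooted_sets n) = B"
    unfolding R by simp_all
  obtain T0 where "T0 \<in> set (rooted_sets (j + 2))"
    using cov_R[OF _ cov_UNIV, of "j + 2"] by auto
  then have "B \<noteq> []" unfolding B_def by auto
  then have "length A < length (rooted_sets n)" unfolding R by simp
  moreover have "\<forall>S\<in>set A. n - 1 \<in> S" unfolding A_def v by auto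
  moreover have "\<forall>S\<in>set B. n - 1 \<notin> S \<and> (\<exists>T\<in>set A. T \<subseteq> insert (n - 1) S)"
  proof
    fix S assume "S \<in> set B"
    then obtain U where S: "S = insert (j + 5) (insert (j + 3) U)" and U: "U \<in> set (rooted_sets (j + 2))"
      unfolding B_def by auto
    have P: "finite U \<and> (\<forall>x\<in>U. x \<le> j + 2) \<and> cov (j + 2) U" by (rule R_props[OF U])
    then have "n - 1 \<notin> S" unfolding S v by auto
    moreover have "cov (j + 3) (insert (j + 3) U)"
    proof -
      have "cov (j + 2) (insert (j + 3) U)" using P cov_mono by blast
      then have "cov (j + 2 + 1) (insert (j + 3) U)" by (intro cov_add1) auto
      moreover have "j + 2 + 1 = j + 3" by simp
      ultimately show ?thesis by metis
    qed
    then obtain T where T: "T \<in> set (rooted_sets (j + 3))" "T \<subseteq> insert (j + 3) U"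
      using cov_R[of "j + 3"] by auto
    then have "insert (j + 4) T \<in> set A" unfolding A_def by auto
    moreover have "insert (j + 4) T \<subseteq> insert (n - 1) S" using T unfolding S v by auto
    ultimately show "n - 1 \<notin> S \<and> (\<exists>T\<in>set A. T \<subseteq> insert (n - 1) S)" by blast
  qed
  ultimately have "length A < length (rooted_sets n) \<and> (\<forall>S\<in>set (take (length A) (rooted_sets n)). n - 1 \<in> S)
     \<and> (\<forall>S\<in>set (drop (length A) (rooted_sets n)). n - 1 \<notin> S \<and> (\<exists>T\<in>set (take (length A) (rooted_sets n)). T \<subseteq> insert (n - 1) S))"
    unfolding tk dk by blast
  then show ?thesis by blast
qed

theorem lemma3p6:
  fixes n :: nat and k :: nat and us :: "'a::field mpoly list"
  assumes "n \<ge> 2"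
    and "us = rooted_list n"
    and "k = (LEAST j. j < length us \<and> \<not> xvar (n - 1) dvd us ! j)"
  shows "ideal_colon (ideal_gen (set (take k us))) (ideal_gen {us ! k})
           = ideal_gen {xvar (n - 1)}
         \<and> (\<forall>i. k < i \<and> i < length us \<longrightarrow>
           ideal_colon (ideal_gen (set (take i us))) (ideal_gen {us ! i})
           = ideal_sum (ideal_gen {xvar (n - 1)})
               (ideal_colon (ideal_gen (set (drop k (take i us)))) (ideal_gen {us ! i})))"
proof -
  obtain k0 where k0: "k0 < length (rooted_sets n)" "\<forall>S\<in>set (take k0 (rooted_sets n)). n - 1 \<in> S"
     "\<forall>S\<in>set (drop k0 (rooted_sets n)). n - 1 \<notin> S \<and> (\<exists>T\<in>set (take k0 (rooted_sets n)). T \<subseteq> insert (n - 1) S)"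
    using rooted_conds[OF assms(1)] by blast
  have us_def: "us = map sqmono (rooted_sets n)" using assms(2) by (simp add: rooted_list_def)
  have fin: "\<forall>S\<in>set (rooted_sets n). finite S" using R_props by blast
  note M = abstract_main2[OF us_def k0(1) fin k0(2) k0(3)]
  have "k = k0" using M(1) assms(3) by simp
  then show ?thesis using M(2) M(3) by simp
qed

end
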